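(* Let $Q\in\mathcal{H}[1,1]$ and let $\alpha,\beta$ be non-negative real numbers with $\beta\neq 0$ such that $|Q(z)-1|<\dfrac{1}{\beta e+\alpha}$ for $z\in\mathbb{D}$. Suppose $p$ is analytic in $\mathbb{D}$ with $p(0)=1$. Then $$p(z)Q(z)+\frac{zp'(z)}{\beta p(z)+\alpha}\prec e^z\quad\Longrightarrow\quad p(z)\prec e^z.$$
   Context: $\mathbb{D}$ is the open unit disk. $\mathcal{H}[1,1]$ is the class of functions analytic in $\mathbb{D}$ of the form $1+a_1z+\cdots$. $f\prec F$ means $f=F\circ\omega$ for some analytic $\omega:\mathbb{D}\to\mathbb{D}$ with $\omega(0)=0$. *)

theory Defs
  imports "HOL-Complex_Analysis.Complex_Analysis"
begin

definition unit_disk :: "complex set" where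
  "unit_disk = ball 0 1"

definition subordinate :: "(complex \<Rightarrow> complex) \<Rightarrow> (complex \<Rightarrow> complex) \<Rightarrow> bool" where
  "subordinate f F \<longleftrightarrow> (\<exists>w. w holomorphic_on unit_disk \<and> w ` unit_disk \<subseteq> unit_disk
      \<and> w 0 = 0 \<and> (\<forall>z\<in>unit_disk. f z = F (w z)))"

definition H11 :: "(complex \<Rightarrow> complex) set" where
  "H11 = {Q. Q holomorphic_on unit_disk \<and> Q 0 = 1}"

end

theory Submission
  imports Defs
begin

lemma cos_lb: "1 - y^2/2 \<le> cos (y::real)"
proof -
  have "cos y = 1 - 2 * sin (y/2)^2" using cos_double_sin[of "y/2"] by simp
  moreover have "sin (y/2)^2 \<le> (y/2)^2"
    using abs_sin_x_le_abs_x[of "y/2"] by (metis abs_ge_zero power2_abs power_mono)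
  ultimately show ?thesis by (simp add: power_divide)
qed

lemma exp_ub: assumes "(x::real) \<le> 1" shows "exp (x - 1) \<le> (1 + x^2)/2"
proof -
  define h where "h t = (1 - t + t^2/2) - exp (-t)" for t :: real
  have "h 0 \<le> h (1 - x)"
  proof (rule DERIV_nonneg_imp_nondecreasing[of 0 "1-x" h])
    show "0 \<le> 1 - x" using assms by simp
    fix t :: real assume "0 \<le> t" "t \<le> 1 - x"
    have "DERIV h t :> (-1 + t + exp (-t))"
      unfolding h_def by (auto intro!: derivative_eq_intros simp: power2_eq_square)
    moreover have "0 \<le> -1 + t + exp (-t)" using exp_ge_add_one_self[of "-t"] by simp
    ultimately show "\<exists>y. DERIV h t :> y \<and> 0 \<le> y" by blast
  qed
  then show ?thesis unfolding h_def by (simp add: power2_eq_square field_simps)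
qed

lemma re_inv_bound:
  fixes w :: complex and \<alpha> \<beta> :: real
  assumes w: "norm w = 1" and a: "\<alpha> \<ge> 0" and b: "\<beta> > 0"
  shows "1/(\<beta>*exp 1 + \<alpha>) \<le> Re (inverse (of_real \<beta> * exp w + of_real \<alpha>))"
proof -
  define x where "x = Re w"
  define y where "y = Im w"
  define E where "E = exp x"
  define C where "C = cos y"
  define S where "S = sin y"
  define K where "K = \<beta>*exp 1 + \<alpha>"
  define R where "R = \<beta>*E*C + \<alpha>"
  define I where "I = \<beta>*E*S"
  have xy: "x^2 + y^2 = 1" using w unfolding x_def y_def by (metis cmod_power2 one_power2)
  have x1: "x \<le> 1" using complex_Re_le_cmod[of w] w unfolding x_def by simp
  have C1: "(1 + x^2)/2 \<le> C" using cos_lb[of y] xy unfolding C_def by simp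
  have C2: "exp (x-1) \<le> C" using exp_ub[OF x1] C1 by linarith
  have Ee: "E = exp 1 * exp (x - 1)" unfolding E_def by (simp add: exp_diff)
  have E0: "E > 0" unfolding E_def by simp
  have eC: "E \<le> exp 1 * C" using C2 Ee by simp
  have Ele: "E \<le> exp 1" using x1 unfolding E_def by simp
  have Cle: "C \<le> 1" "C > 0" 
    using C1 zero_le_power2[of x] unfolding C_def by (simp_all, linarith)
  have EC: "E * C \<le> exp 1" using Ele Cle E0 by (smt (verit) mult_left_le)
  have CS: "C^2 + S^2 = 1" unfolding C_def S_def by simp
  have R0: "R > 0" unfolding R_def using b E0 Cle a by (simp add: add_pos_nonneg)
  have K0: "K > 0" unfolding K_def using b a by (simp add: add_pos_nonneg)
  have nrm: "R^2 + I^2 = \<beta>^2*E^2 + 2*\<alpha>*\<beta>*E*C + \<alpha>^2"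
  proof -
    have "R^2 + I^2 = \<beta>^2*E^2*(C^2+S^2) + 2*\<alpha>*\<beta>*E*C + \<alpha>^2"
      unfolding R_def I_def by (simp add: power2_eq_square algebra_simps)
    then show ?thesis using CS by simp
  qed
  have diff: "K*R - (R^2 + I^2) = \<beta>^2*E*(exp 1 * C - E) + \<alpha>*\<beta>*(exp 1 - E*C)"
    unfolding nrm unfolding K_def R_def by (simp add: power2_eq_square algebra_simps)
  have "0 \<le> \<beta>^2*E*(exp 1 * C - E)" using eC E0 by simp
  moreover have "0 \<le> \<alpha>*\<beta>*(exp 1 - E*C)" using EC a b by simp
  ultimately have main: "R^2 + I^2 \<le> K*R" using diff by linarith
  have pos: "R^2 + I^2 > 0" using R0 by (simp add: add_pos_nonneg)
  have "1/K \<le> R/(R^2+I^2)" using main pos K0 by (simp add: field_simps)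
  moreover have "Re (of_real \<beta> * exp w + of_real \<alpha>) = R" "Im (of_real \<beta> * exp w + of_real \<alpha>) = I"
    unfolding R_def I_def E_def C_def S_def x_def y_def by (simp_all add: Re_exp Im_exp)
  ultimately show ?thesis unfolding K_def by (simp add: inverse_eq_divide Re_divide power2_eq_square)
qed

lemma trig_aux:
  fixes \<theta> \<phi> :: real
  assumes "\<theta> \<le> \<phi>" "\<phi> \<le> \<theta> + 2*pi"
  shows "exp (cos \<phi> - cos \<theta>) * cos (sin \<phi> - sin \<theta> - \<theta>) \<le> cos \<theta>"
proof -
  define g where "g t = exp (cos t - cos \<theta>) * cos (sin t - sin \<theta> - \<theta>)" for t :: real
  define k where "k t = t + sin t" for t :: real
  have dg: "DERIV g t :> - exp (cos t - cos \<theta>) * sin (k t - k \<theta>)" for t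
  proof -
    have e: "k t - k \<theta> = t + (sin t - sin \<theta> - \<theta>)" unfolding k_def by simp
    show ?thesis unfolding g_def e sin_add
      by (auto intro!: derivative_eq_intros simp: algebra_simps)
  qed
  have kmono: "k a \<le> k b" if "a \<le> b" for a b
  proof (rule DERIV_nonneg_imp_nondecreasing[of a b k])
    show "a \<le> b" by fact
    fix t
    have "DERIV k t :> 1 + cos t" unfolding k_def by (auto intro!: derivative_eq_intros)
    moreover have "0 \<le> 1 + cos t" using cos_ge_minus_one[of t] by linarith
    ultimately show "\<exists>y. DERIV k t :> y \<and> 0 \<le> y" by blast
  qed
  have k2: "k (\<theta> + 2*pi) = k \<theta> + 2*pi" unfolding k_def by simp
  have g2: "g (\<theta> + 2*pi) = g \<theta>" unfolding g_def by simp
  have g0: "g \<theta> = cos \<theta>" unfolding g_def by simp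
  show ?thesis
  proof (cases "k \<phi> - k \<theta> \<le> pi")
    case True
    have "g \<phi> \<le> g \<theta>"
    proof (rule DERIV_nonpos_imp_nonincreasing[of \<theta> \<phi> g])
      show "\<theta> \<le> \<phi>" by fact
      fix t assume t: "\<theta> \<le> t" "t \<le> \<phi>"
      have "0 \<le> k t - k \<theta>" "k t - k \<theta> \<le> pi" using kmono[OF t(1)] kmono[OF t(2)] True by auto
      then have "0 \<le> sin (k t - k \<theta>)" by (simp add: sin_ge_zero)
      then have "- exp (cos t - cos \<theta>) * sin (k t - k \<theta>) \<le> 0" by simp
      then show "\<exists>y. DERIV g t :> y \<and> y \<le> 0" using dg by blast
    qed
    then show ?thesis using g0 unfolding g_def by simp
  next
    case False
    have "g \<phi> \<le> g (\<theta> + 2*pi)"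
    proof (rule DERIV_nonneg_imp_nondecreasing[of \<phi> "\<theta> + 2*pi" g])
      show "\<phi> \<le> \<theta> + 2*pi" by fact
      fix t assume t: "\<phi> \<le> t" "t \<le> \<theta> + 2*pi"
      have "pi \<le> k t - k \<theta>" "k t - k \<theta> \<le> 2*pi" using kmono[OF t(1)] kmono[OF t(2)] False k2 by auto
      then have "0 \<le> sin (k t - k \<theta> - pi)" by (intro sin_ge_zero) auto
      then have "sin (k t - k \<theta>) \<le> 0" by (simp add: sin_diff)
      then have "0 \<le> - exp (cos t - cos \<theta>) * sin (k t - k \<theta>)" by (simp add: mult_nonneg_nonpos)
      then show "\<exists>y. DERIV g t :> y \<and> 0 \<le> y" using dg by blast
    qed
    then show ?thesis using g0 g2 unfolding g_def by simp
  qed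
qed

lemma trig1:
  fixes \<theta> \<phi> :: real
  shows "exp (cos \<phi> - cos \<theta>) * cos (sin \<phi> - sin \<theta> - \<theta>) \<le> cos \<theta>"
proof -
  define n where "n = \<lfloor>(\<phi> - \<theta>)/(2*pi)\<rfloor>"
  define \<psi> where "\<psi> = \<phi> - (2*pi) * of_int n"
  have n1: "of_int n \<le> (\<phi> - \<theta>)/(2*pi)" unfolding n_def by (rule of_int_floor_le)
  have n2: "(\<phi> - \<theta>)/(2*pi) < of_int n + 1" unfolding n_def by (rule real_of_int_floor_add_one_gt)
  have "(2*pi) * of_int n \<le> \<phi> - \<theta>" using n1 by (simp add: field_simps)
  moreover have "\<phi> - \<theta> < (2*pi) * (of_int n + 1)" using n2 by (simp add: field_simps)
  ultimately have "\<theta> \<le> \<psi>" "\<psi> \<le> \<theta> + 2*pi" unfolding \<psi>_def by (auto simp: algebra_simps)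
  from trig_aux[OF this] have "exp (cos \<psi> - cos \<theta>) * cos (sin \<psi> - sin \<theta> - \<theta>) \<le> cos \<theta>" .
  moreover have "cos \<psi> = cos \<phi>" "sin \<psi> = sin \<phi>" unfolding \<psi>_def by (simp_all add: cos_diff sin_diff)
  ultimately show ?thesis by simp
qed

lemma re_comp:
  fixes \<theta> \<phi> :: real
  shows "Re (cnj (exp (\<i> * of_real \<theta>)) * exp (exp (\<i> * of_real \<phi>) - exp (\<i> * of_real \<theta>)))
     = exp (cos \<phi> - cos \<theta>) * cos (sin \<phi> - sin \<theta> - \<theta>)"
proof -
  have "Re (cnj (exp (\<i> * of_real \<theta>)) * exp (exp (\<i> * of_real \<phi>) - exp (\<i> * of_real \<theta>)))
     = exp (cos \<phi> - cos \<theta>) * (cos \<theta> * cos (sin \<phi> - sin \<theta>) + sin \<theta> * sin (sin \<phi> - sin \<theta>))"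
    by (simp add: Re_exp Im_exp algebra_simps)
  also have "\<dots> = exp (cos \<phi> - cos \<theta>) * cos (sin \<phi> - sin \<theta> - \<theta>)"
  proof -
    have "cos (sin \<phi> - sin \<theta> - \<theta>) = cos (sin \<phi> - sin \<theta>) * cos \<theta> + sin (sin \<phi> - sin \<theta>) * sin \<theta>"
      by (rule cos_diff)
    then show ?thesis by (simp only:) (simp add: algebra_simps)
  qed
  finally show ?thesis .
qed

lemma conv_exp:
  fixes a u :: complex
  assumes a: "norm a = 1" and u: "norm u < 1"
  shows "Re (cnj a * (exp (u - a) - 1)) \<le> 0"
proof -
  define f where "f z = exp (cnj a * exp (z - a))" for z
  have "norm (f u) \<le> exp (Re (cnj a))"
  proof (rule maximum_modulus_frontier[where S = "ball 0 1" and f = f and \<xi> = u])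
    show "f holomorphic_on interior (ball 0 1)" unfolding f_def by (intro holomorphic_intros)
    show "continuous_on (closure (ball 0 1)) f" unfolding f_def by (intro continuous_intros)
    show "bounded (ball (0::complex) 1)" by simp
    show "u \<in> ball 0 1" using u by simp
    fix z :: complex assume "z \<in> frontier (ball 0 1)"
    then have z: "norm z = 1" by simp
    define \<theta> where "\<theta> = Arg a"
    define \<phi> where "\<phi> = Arg z"
    have ae: "a = exp (\<i> * of_real \<theta>)" using Arg_eq[of a] a unfolding \<theta>_def by force
    have ze: "z = exp (\<i> * of_real \<phi>)" using Arg_eq[of z] z unfolding \<phi>_def by force
    have "Re (cnj a * exp (z - a)) = exp (cos \<phi> - cos \<theta>) * cos (sin \<phi> - sin \<theta> - \<theta>)"
      unfolding ae ze by (rule re_comp)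
    also have "\<dots> \<le> cos \<theta>" by (rule trig1)
    also have "cos \<theta> = Re (cnj a)" unfolding ae by (simp add: Re_exp)
    finally show "norm (f z) \<le> exp (Re (cnj a))" unfolding f_def by simp
  qed
  then have "Re (cnj a * exp (u - a)) \<le> Re (cnj a)" unfolding f_def by simp
  then show ?thesis by (simp add: algebra_simps)
qed

lemma Re_chain:
  fixes \<gamma> :: "real \<Rightarrow> complex" and g :: "complex \<Rightarrow> complex"
  assumes "(\<gamma> has_vector_derivative \<gamma>') (at t)" "(g has_field_derivative g') (at (\<gamma> t))"
  shows "((\<lambda>s. Re (c * g (\<gamma> s))) has_real_derivative Re (c * (\<gamma>' * g'))) (at t)"
proof -
  have "((g \<circ> \<gamma>) has_vector_derivative (\<gamma>' * g')) (at t)"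
    by (rule field_vector_diff_chain_at[OF assms])
  then have "((\<lambda>s. c * (g \<circ> \<gamma>) s) has_vector_derivative (c * (\<gamma>' * g'))) (at t)"
    by (rule has_vector_derivative_mult_right)
  then have "((\<lambda>s. Re (c * (g \<circ> \<gamma>) s)) has_field_derivative Re (c * (\<gamma>' * g'))) (at t)"
    by (rule has_field_derivative_Re)
  then show ?thesis by (simp add: o_def)
qed

lemma final_contra:
  fixes w0 u q :: complex and \<alpha> \<beta> m :: real
  assumes w: "norm w0 = 1" and u: "norm u < 1" and a: "\<alpha> \<ge> 0" and b: "\<beta> > 0" and m: "m \<ge> 1"
    and q: "norm q < 1/(\<beta>*exp 1 + \<alpha>)"
    and eq: "exp u = exp w0 * (1 + q + w0 * of_real m / (of_real \<beta> * exp w0 + of_real \<alpha>))"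
  shows False
proof -
  define c where "c = of_real \<beta> * exp w0 + of_real \<alpha>"
  have e: "exp (u - w0) = 1 + q + w0 * of_real m / c"
    using eq unfolding c_def by (simp add: exp_diff field_simps)
  have "Re (cnj w0 * (exp (u - w0) - 1)) \<le> 0" by (rule conv_exp[OF w u])
  moreover have ww: "cnj w0 * w0 = 1" using w by (metis complex_norm_square mult.commute norm_one of_real_1 power_one)
  have "cnj w0 * (exp (u - w0) - 1) = cnj w0 * q + of_real m * inverse c"
    unfolding e using ww by (simp add: algebra_simps divide_inverse)
  moreover have "Re (of_real m * inverse c) = m * Re (inverse c)" by simp
  moreover have r: "1/(\<beta>*exp 1 + \<alpha>) \<le> Re (inverse c)" unfolding c_def by (rule re_inv_bound[OF w a b])
  moreover have "- norm q \<le> Re (cnj w0 * q)"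
  proof -
    have "\<bar>Re (cnj w0 * q)\<bar> \<le> norm (cnj w0 * q)" by (rule abs_Re_le_cmod)
    also have "\<dots> = norm q" using w by (simp add: norm_mult)
    finally show ?thesis by linarith
  qed
  moreover have "Re (inverse c) \<le> m * Re (inverse c)"
  proof -
    have "0 \<le> Re (inverse c)" using r q by (smt (verit) norm_ge_zero)
    then show ?thesis using mult_right_mono[OF m] by (metis mult_1)
  qed
  ultimately show False using q by simp
qed

definition EE :: "complex set" where "EE = {w. 0 < Re w \<and> norm (Ln w) < 1}"

lemma Re_exp_pos: assumes "norm (u::complex) \<le> 1" shows "0 < Re (exp u)"
proof -
  have "\<bar>Im u\<bar> \<le> 1" using abs_Im_le_cmod[of u] assms by linarith
  then have "0 < cos (Im u)" using pi_gt3 by (intro cos_gt_zero_pi) auto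
  then show ?thesis by (simp add: Re_exp)
qed

lemma EE_iff: "w \<in> EE \<longleftrightarrow> (\<exists>u. norm u < 1 \<and> w = exp u)"
proof
  assume "w \<in> EE"
  then have "0 < Re w" "norm (Ln w) < 1" unfolding EE_def by auto
  moreover have "w \<noteq> 0" using \<open>0 < Re w\<close> by auto
  ultimately show "\<exists>u. norm u < 1 \<and> w = exp u" by (intro exI[of _ "Ln w"]) simp
next
  assume "\<exists>u. norm u < 1 \<and> w = exp u"
  then obtain u where u: "norm u < 1" "w = exp u" by blast
  have "\<bar>Im u\<bar> < 1" using abs_Im_le_cmod[of u] u by linarith
  then have "Ln w = u" using u pi_gt3 by simp
  moreover have "0 < Re w" using Re_exp_pos[of u] u by simp
  ultimately show "w \<in> EE" using u unfolding EE_def by simp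
qed

lemma open_EE: "open EE"
proof -
  have "EE = {w. 0 < Re w} \<inter> Ln -` ball 0 1" unfolding EE_def by auto
  moreover have "open ({w. 0 < Re w} \<inter> Ln -` ball 0 1)"
  proof (rule continuous_open_preimage)
    show "continuous_on {w. 0 < Re w} Ln" by (rule continuous_on_Ln) (auto simp: complex_nonpos_Reals_iff)
    show "open {w. 0 < Re w}" by (intro open_Collect_less continuous_intros)
  qed simp
  ultimately show ?thesis by simp
qed


theorem mainTheorem17:
  fixes Q p :: "complex \<Rightarrow> complex" and \<alpha> \<beta> :: real
  assumes "Q \<in> H11"
    and "\<alpha> \<ge> 0" and "\<beta> \<ge> 0" and "\<beta> \<noteq> 0"
    and "\<forall>z\<in>unit_disk. cmod (Q z - 1) < 1 / (\<beta> * exp 1 + \<alpha>)"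
    and "p holomorphic_on unit_disk" and "p 0 = 1"
    and "\<forall>z\<in>unit_disk. of_real \<beta> * p z + of_real \<alpha> \<noteq> 0"
    and "subordinate (\<lambda>z. p z * Q z + z * deriv p z / (of_real \<beta> * p z + of_real \<alpha>)) exp"
  shows "subordinate p exp"
proof -
  note assms(2) [simp]
  have b: "\<beta> > 0" using assms(3,4) by simp
  have holp: "p holomorphic_on ball 0 1" using assms(6) unfolding unit_disk_def .
  have contp: "continuous_on (ball 0 1) p" using holp by (rule holomorphic_on_imp_continuous_on)
  have isp: "isCont p z" if "z \<in> ball 0 1" for z
    using contp that by (simp add: continuous_on_eq_continuous_at)
  obtain \<omega> where hol\<omega>: "\<omega> holomorphic_on unit_disk" and img\<omega>: "\<omega> ` unit_disk \<subseteq> unit_disk"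
    and F: "\<forall>z\<in>unit_disk. p z * Q z + z * deriv p z / (of_real \<beta> * p z + of_real \<alpha>) = exp (\<omega> z)"
    using assms(9) unfolding subordinate_def by blast
  have sub: "\<forall>z\<in>ball 0 1. p z \<in> EE"
  proof (rule ccontr)
    assume "\<not> (\<forall>z\<in>ball 0 1. p z \<in> EE)"
    then obtain z1 where z1: "z1 \<in> ball 0 1" "p z1 \<notin> EE" by blast
    define B where "B = cball 0 (norm z1) \<inter> p -` (- EE)"
    have cb: "cball 0 (norm z1) \<subseteq> ball 0 1" using z1 by auto
    have "closed B" unfolding B_def
      by (rule continuous_closed_preimage) (use continuous_on_subset[OF contp cb] open_EE in auto)
    then have "compact B" unfolding B_def by (meson bounded_Int bounded_cball compact_eq_bounded_closed)
    moreover have "z1 \<in> B" unfolding B_def using z1 by auto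
    ultimately obtain z0 where z0B: "z0 \<in> B" and z0min: "\<forall>y\<in>B. norm z0 \<le> norm y"
      using continuous_attains_inf[of B norm] by (auto intro: continuous_intros)
    define r0 where "r0 = norm z0"
    have z0D: "z0 \<in> ball 0 1" using z0B cb z1 unfolding B_def by auto
    have pz0: "p z0 \<notin> EE" using z0B unfolding B_def by auto
    have p0E: "p 0 \<in> EE" using assms(7) unfolding EE_def by simp
    have z0nz: "z0 \<noteq> 0" using pz0 p0E by auto
    have r0: "0 < r0" "r0 < 1" using z0nz z0D unfolding r0_def by auto
    have inside: "p z \<in> EE" if "norm z < r0" for z
    proof (rule ccontr)
      assume "p z \<notin> EE"
      moreover have "norm z \<le> norm z1" using that z0B unfolding r0_def B_def by auto
      ultimately have "z \<in> B" unfolding B_def by auto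
      then show False using z0min that unfolding r0_def by force
    qed
    have lim: "((\<lambda>t::real. of_real t * z0) \<longlongrightarrow> z0) (at_left 1)"
    proof -
      have "((\<lambda>t::real. of_real t * z0) \<longlongrightarrow> of_real 1 * z0) (at_left 1)"
        by (intro tendsto_intros)
      then show ?thesis by simp
    qed
    have evin: "eventually (\<lambda>t::real. norm (of_real t * z0) < r0) (at_left 1)"
    proof -
      have "eventually (\<lambda>t::real. t \<in> {0<..<1}) (at_left 1)" by (rule eventually_at_left_real) simp
      then show ?thesis
        by eventually_elim (use r0 in \<open>auto simp: norm_mult r0_def\<close>)
    qed
    have "p z0 \<in> exp ` cball 0 1"
    proof (rule Lim_in_closed_set)
      show "closed (exp ` cball (0::complex) 1)"
        by (intro compact_imp_closed compact_continuous_image continuous_intros) simp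
      show "eventually (\<lambda>t. p (of_real t * z0) \<in> exp ` cball 0 1) (at_left (1::real))"
        using evin
      proof eventually_elim
        case (elim t)
        then obtain u where "norm u < 1" "p (of_real t * z0) = exp u" using inside EE_iff by blast
        then show ?case by auto
      qed
      show "((\<lambda>t. p (of_real t * z0)) \<longlongrightarrow> p z0) (at_left (1::real))"
        by (rule isCont_tendsto_compose[OF isp[OF z0D] lim])
    qed simp
    then obtain w0 where w0: "norm w0 \<le> 1" "p z0 = exp w0" by auto
    have w01: "norm w0 = 1"
    proof (rule ccontr)
      assume "norm w0 \<noteq> 1"
      then have "norm w0 < 1" using w0 by simp
      then have "p z0 \<in> EE" using w0 EE_iff by blast
      then show False using pz0 by simp
    qed
    have ww: "cnj w0 * w0 = 1" using w01 by (metis complex_norm_square mult.commute norm_one of_real_1 power_one)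
    define U where "U = ball 0 1 \<inter> p -` {w. 0 < Re w}"
    have openU: "open U" unfolding U_def
      by (rule continuous_open_preimage[OF contp]) (auto intro!: open_Collect_less continuous_intros)
    have Repz0: "0 < Re (p z0)" using Re_exp_pos[OF w0(1)] w0 by simp
    have z0U: "z0 \<in> U" unfolding U_def using z0D Repz0 by simp
    have ballU: "ball 0 r0 \<subseteq> U"
    proof
      fix z :: complex assume "z \<in> ball 0 r0"
      then have "norm z < r0" by simp
      then have "p z \<in> EE" by (rule inside)
      then show "z \<in> U" unfolding U_def EE_def using \<open>norm z < r0\<close> r0 by auto
    qed
    define g where "g z = Ln (p z)" for z
    have notR: "p z \<notin> \<real>\<^sub>\<le>\<^sub>0" if "z \<in> U" for z using that unfolding U_def by (auto simp: complex_nonpos_Reals_iff)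
    have holg: "g holomorphic_on U" unfolding g_def
      by (rule holomorphic_on_Ln') (use notR holomorphic_on_subset[OF holp] U_def in auto)
    have g_in: "norm (g z) < 1" if "norm z < r0" for z
      using inside[OF that] unfolding g_def EE_def by simp
    have g0: "g 0 = 0" unfolding g_def using assms(7) by simp
    have gz0: "g z0 = w0"
    proof -
      have "\<bar>Im w0\<bar> \<le> 1" using abs_Im_le_cmod[of w0] w01 by linarith
      then show ?thesis unfolding g_def w0(2) using pi_gt3 by simp
    qed
    have schwarz: "norm (g z) \<le> norm z / r0" if "norm z < r0" for z
    proof -
      define f where "f \<xi> = g (of_real r0 * \<xi>)" for \<xi>
      have "f holomorphic_on ball 0 1"
      proof -
        have "(\<lambda>\<xi>::complex. of_real r0 * \<xi>) ` ball 0 1 \<subseteq> ball 0 r0"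
        proof (rule image_subsetI)
          fix \<xi> :: complex assume "\<xi> \<in> ball 0 1"
          then have "norm \<xi> < 1" by simp
          then show "of_real r0 * \<xi> \<in> ball 0 r0" using r0 by (simp add: norm_mult)
        qed
        then have "g holomorphic_on (\<lambda>\<xi>. of_real r0 * \<xi>) ` ball 0 1"
          using holomorphic_on_subset[OF holg] ballU by blast
        then show ?thesis unfolding f_def
          using holomorphic_on_compose[of "\<lambda>\<xi>. of_real r0 * \<xi>" "ball 0 1" g]
          by (auto simp: o_def intro: holomorphic_intros)
      qed
      moreover have "f 0 = 0" unfolding f_def using g0 by simp
      moreover have "norm (f \<xi>) < 1" if "norm \<xi> < 1" for \<xi>
        unfolding f_def using that r0 by (intro g_in) (simp add: norm_mult)
      moreover have "norm (z / of_real r0) < 1" using that r0 by (simp add: norm_divide)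
      ultimately have "norm (f (z / of_real r0)) \<le> norm (z / of_real r0)"
        by (intro Schwarz_Lemma(1)) auto
      then show ?thesis unfolding f_def using r0 by (simp add: norm_divide)
    qed
    have bdry: "norm (g z) \<le> 1" if "z \<in> U" "norm z = r0" for z
    proof (rule Lim_norm_ubound)
      show "\<not> trivial_limit (at_left (1::real))" by simp
      have "isCont g z"
        using holomorphic_on_imp_continuous_on[OF holg] openU that(1)
        by (simp add: continuous_on_eq_continuous_at)
      moreover have "((\<lambda>t::real. of_real t * z) \<longlongrightarrow> z) (at_left 1)"
      proof -
        have "((\<lambda>t::real. of_real t * z) \<longlongrightarrow> of_real 1 * z) (at_left 1)"
          by (intro tendsto_intros)
        then show ?thesis by simp
      qed
      ultimately show "((\<lambda>t. g (of_real t * z)) \<longlongrightarrow> g z) (at_left 1)"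
        by (rule isCont_tendsto_compose)
      have "eventually (\<lambda>t::real. t \<in> {0<..<1}) (at_left 1)" by (rule eventually_at_left_real) simp
      then show "eventually (\<lambda>t. norm (g (of_real t * z)) \<le> 1) (at_left 1)"
      proof eventually_elim
        case (elim t)
        then have "norm (of_real t * z) < r0" using that r0 by (auto simp: norm_mult)
        then show ?case using g_in by (simp add: less_imp_le)
      qed
    qed
    define p' where "p' = deriv p z0"
    have dp: "(p has_field_derivative p') (at z0)" unfolding p'_def
      by (rule holomorphic_derivI[OF holp _ z0D]) simp
    define gd where "gd = inverse (p z0) * p'"
    have dg: "(g has_field_derivative gd) (at z0)" unfolding g_def gd_def
      by (rule DERIV_chain2[OF has_field_derivative_Ln[OF notR[OF z0U]] dp])
    define M where "M = cnj w0 * (z0 * gd)"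
    have radial: "1 \<le> Re M"
    proof (rule ccontr)
      assume neg: "\<not> 1 \<le> Re M"
      define fr where "fr t = Re (cnj w0 * g (of_real t * z0)) - t" for t :: real
      have "((\<lambda>t::real. of_real t * z0) has_vector_derivative z0) (at 1)"
        by (auto intro!: derivative_eq_intros)
      moreover have "(g has_field_derivative gd) (at ((\<lambda>t::real. of_real t * z0) 1))" using dg by simp
      ultimately have "((\<lambda>s. Re (cnj w0 * g ((\<lambda>t::real. of_real t * z0) s))) has_real_derivative Re (cnj w0 * (z0 * gd))) (at 1)"
        by (rule Re_chain)
      then have "DERIV fr 1 :> Re M - 1" unfolding fr_def M_def
        by (rule DERIV_diff[OF _ DERIV_ident])
      from DERIV_neg_dec_left[OF this] neg obtain d where d: "d > 0" "\<forall>h>0. h < d \<longrightarrow> fr 1 < fr (1 - h)"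
        by auto
      define h where "h = min (d/2) (1/2)"
      have h: "0 < h" "h < d" "h < 1" unfolding h_def using d by auto
      have "fr 1 = 0" unfolding fr_def using gz0 ww by simp
      moreover have "fr (1 - h) \<le> 0"
      proof -
        have nn: "norm (complex_of_real (1 - h) * z0) = (1 - h) * r0"
          unfolding norm_mult norm_of_real r0_def using h by simp
        have "(1 - h) * r0 < 1 * r0" using h r0 by (intro mult_strict_right_mono) auto
        then have n: "norm (of_real (1 - h) * z0) < r0" by (simp only: nn mult_1)
        have "Re (cnj w0 * g (of_real (1 - h) * z0)) \<le> norm (cnj w0 * g (of_real (1 - h) * z0))"
          by (rule complex_Re_le_cmod)
        also have "\<dots> = norm (g (of_real (1 - h) * z0))" using w01 by (simp add: norm_mult)
        also have "\<dots> \<le> norm (of_real (1 - h) * z0) / r0" by (rule schwarz[OF n])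
        also have "\<dots> = 1 - h" using nn r0 by simp
        finally show ?thesis unfolding fr_def by simp
      qed
      ultimately show False using d h by force
    qed
    have tang: "Im M = 0"
    proof -
      define \<gamma> where "\<gamma> s = z0 * exp (\<i> * of_real s)" for s :: real
      define ft where "ft s = Re (cnj w0 * g (\<gamma> s))" for s
      have "(\<gamma> has_vector_derivative z0 * \<i>) (at 0)"
      proof -
        have "((\<lambda>z. exp (\<i> * z)) has_field_derivative \<i> * exp (\<i> * of_real 0)) (at (of_real 0))"
          by (auto intro!: derivative_eq_intros)
        then have "((\<lambda>x::real. exp (\<i> * of_real x)) has_vector_derivative \<i> * exp (\<i> * of_real 0)) (at 0)"
          by (rule has_vector_derivative_real_field)
        then have "((\<lambda>x::real. z0 * exp (\<i> * of_real x)) has_vector_derivative z0 * (\<i> * exp (\<i> * of_real 0))) (at 0)"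
          by (rule has_vector_derivative_mult_right)
        then show ?thesis unfolding \<gamma>_def by simp
      qed
      moreover have "(g has_field_derivative gd) (at (\<gamma> 0))" using dg unfolding \<gamma>_def by simp
      ultimately have "DERIV ft 0 :> Re (cnj w0 * (z0 * \<i> * gd))" unfolding ft_def
        by (rule Re_chain)
      moreover obtain d where d: "d > 0" "\<forall>s. \<bar>0 - s\<bar> < d \<longrightarrow> ft s \<le> ft 0"
      proof -
        have "isCont \<gamma> 0" unfolding \<gamma>_def by (intro continuous_intros)
        then have "(\<gamma> \<longlongrightarrow> \<gamma> 0) (at 0)" by (simp add: isCont_def)
        moreover have "\<gamma> 0 \<in> U" unfolding \<gamma>_def using z0U by simp
        ultimately have "eventually (\<lambda>s. \<gamma> s \<in> U) (at 0)" using openU by (auto intro: topological_tendstoD)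
        then obtain d where d: "d > 0" "\<forall>s. s \<noteq> 0 \<and> dist s 0 < d \<longrightarrow> \<gamma> s \<in> U"
          unfolding eventually_at by auto
        have "ft s \<le> ft 0" if "\<bar>0 - s\<bar> < d" for s
        proof -
          have sU: "\<gamma> s \<in> U" using d that \<open>\<gamma> 0 \<in> U\<close> by (cases "s = 0") (auto simp: dist_real_def)
          have sn: "norm (\<gamma> s) = r0" unfolding \<gamma>_def r0_def by (simp add: norm_mult)
          have "ft s \<le> norm (cnj w0 * g (\<gamma> s))" unfolding ft_def by (rule complex_Re_le_cmod)
          also have "\<dots> = norm (g (\<gamma> s))" using w01 by (simp add: norm_mult)
          also have "\<dots> \<le> 1" by (rule bdry[OF sU sn])
          also have "1 = ft 0" unfolding ft_def \<gamma>_def using gz0 ww by simp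
          finally show ?thesis .
        qed
        then show ?thesis using that d by blast
      qed
      ultimately have "Re (cnj w0 * (z0 * \<i> * gd)) = 0" by (intro DERIV_local_max) auto
      moreover have "cnj w0 * (z0 * \<i> * gd) = \<i> * M" unfolding M_def by (simp add: algebra_simps)
      ultimately show ?thesis by simp
    qed
    define m where "m = Re M"
    have Mm: "M = of_real m" unfolding m_def using tang by (simp add: complex_eq_iff)
    have zgd: "z0 * gd = w0 * of_real m"
    proof -
      have "w0 * M = (cnj w0 * w0) * (z0 * gd)" unfolding M_def by (simp add: algebra_simps)
      then show ?thesis using ww Mm by simp
    qed
    have pnz: "p z0 \<noteq> 0" using Repz0 by auto
    have zp': "z0 * p' = exp w0 * (w0 * of_real m)"
    proof -
      have "z0 * p' = p z0 * (z0 * gd)" unfolding gd_def using pnz by (simp add: field_simps)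
      then show ?thesis using zgd w0 by simp
    qed
    have z0ud: "z0 \<in> unit_disk" using z0D unfolding unit_disk_def .
    have Fz0: "p z0 * Q z0 + z0 * p' / (of_real \<beta> * p z0 + of_real \<alpha>) = exp (\<omega> z0)"
      using F z0ud unfolding p'_def by blast
    have u: "norm (\<omega> z0) < 1" using img\<omega> z0ud unfolding unit_disk_def by (metis image_subset_iff mem_ball_0)
    have q: "norm (Q z0 - 1) < 1 / (\<beta> * exp 1 + \<alpha>)" using assms(5) z0ud by blast
    have "exp (\<omega> z0) = exp w0 * (1 + (Q z0 - 1) + w0 * of_real m / (of_real \<beta> * exp w0 + of_real \<alpha>))"
      using Fz0[symmetric] unfolding zp' w0(2) by (simp add: algebra_simps)
    then show False
      using final_contra[OF w01 u assms(2) b _ q] radial unfolding m_def by blast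
  qed
  have nR: "p z \<notin> \<real>\<^sub>\<le>\<^sub>0" if "z \<in> ball 0 1" for z
    using sub that unfolding EE_def by (force simp: complex_nonpos_Reals_iff)
  show ?thesis unfolding subordinate_def
  proof (intro exI[of _ "\<lambda>z. Ln (p z)"] conjI ballI)
    show "(\<lambda>z. Ln (p z)) holomorphic_on unit_disk" unfolding unit_disk_def
      by (rule holomorphic_on_Ln') (use nR holp in auto)
    show "(\<lambda>z. Ln (p z)) ` unit_disk \<subseteq> unit_disk"
      using sub unfolding unit_disk_def EE_def by auto
    show "Ln (p 0) = 0" using assms(7) by simp
    fix z assume "z \<in> unit_disk"
    then have "0 < Re (p z)" using sub unfolding unit_disk_def EE_def by auto
    then have "p z \<noteq> 0" by auto
    then show "p z = exp (Ln (p z))" by simp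
  qed
qed

end
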